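(* Let $p$ be a prime, $e\ge1$, $q=p^e$, $0\le\ell\le e-1$, $m\ge n$, and let $\varphi_1,\dots,\varphi_m\in\mathbb{F}_q^n$ span $\mathbb{F}_q^n$. Let $\Phi$ be the $n\times m$ matrix with columns $\varphi_1,\dots,\varphi_m$, and for an integer $k\ge0$ let $\Phi^{\dagger_k}=\sigma_k(\Phi)^t$. Let $c\in\mathbb{F}_q$. Then the following are equivalent: (1) $\Phi\Phi^{\dagger_\ell}=cI_n$ (i.e. $\{\varphi_i\}$ is an $\ell$-Galois $c$-tight frame); (2) $G^2=cG$, where $G=\Phi^{\dagger_\ell}\Phi=\big((\varphi_i,\varphi_j)_\ell\big)_{i,j\in[m]}$ is the $\ell$-Galois Gram matrix; (3) $(\Phi^{\dagger_{e-\ell}}\mathbf{x},\Phi^{\dagger_\ell}\mathbf{y})_\ell=c(\mathbf{x},\mathbf{y})_\ell$ for all $\mathbf{x},\mathbf{y}\in\mathbb{F}_q^n$.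
   Context: For an integer $k\ge0$, $\sigma_k(c)=c^{p^k}$ for $c\in\mathbb{F}_q$, applied entrywise to matrices, and for vectors $\mathbf{x},\mathbf{y}$ of the same length $N$, $(\mathbf{x},\mathbf{y})_\ell=\sum_{i=1}^N x_i^{p^\ell}y_i$. $[m]=\{1,\dots,m\}$. *)

theory Defs
  imports "HOL-Analysis.Analysis"
begin

definition sigmaM :: "nat \<Rightarrow> nat \<Rightarrow> 'a::field ^'c^'r \<Rightarrow> 'a^'c^'r" where
  "sigmaM p k A = (\<chi> i j. (A $ i $ j) ^ (p ^ k))"

definition dagger :: "nat \<Rightarrow> nat \<Rightarrow> 'a::field ^'c^'r \<Rightarrow> 'a^'r^'c" where
  "dagger p k A = transpose (sigmaM p k A)"

definition gip :: "nat \<Rightarrow> nat \<Rightarrow> 'a::field ^'n \<Rightarrow> 'a^'n \<Rightarrow> 'a" where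
  "gip p l x y = (\<Sum>i\<in>UNIV. (x $ i) ^ (p ^ l) * y $ i)"

end

theory Submission
  imports Defs "HOL-Number_Theory.Residues"
begin


lemma frob_add:
  fixes a b :: "'a::comm_ring_1"
  assumes p: "prime p" and z: "of_nat p = (0::'a)"
  shows "(a + b) ^ p = a ^ p + b ^ p"
proof -
  have p0: "p > 0" using p prime_gt_0_nat by blast
  have "(a + b) ^ p = (\<Sum>k\<le>p. of_nat (p choose k) * a ^ k * b ^ (p - k))"
    by (rule binomial_ring)
  also have "\<dots> = (\<Sum>k\<in>{0,p}. of_nat (p choose k) * a ^ k * b ^ (p - k))"
  proof (rule sum.mono_neutral_right)
    show "\<forall>i\<in>{..p} - {0, p}. of_nat (p choose i) * a ^ i * b ^ (p - i) = 0"
    proof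
      fix i assume i: "i \<in> {..p} - {0, p}"
      have "p dvd (p choose i)" using i p0 by (intro dvd_choose_prime p) auto
      then obtain r where "p choose i = p * r" by blast
      then have "(of_nat (p choose i) :: 'a) = 0" by (simp add: z)
      then show "of_nat (p choose i) * a ^ i * b ^ (p - i) = 0" by simp
    qed
  qed auto
  also have "\<dots> = a ^ p + b ^ p" using p0 by simp
  finally show ?thesis .
qed

lemma frob_pow_add:
  fixes a b :: "'a::comm_ring_1"
  assumes p: "prime p" and z: "of_nat p = (0::'a)"
  shows "(a + b) ^ (p ^ k) = a ^ (p ^ k) + b ^ (p ^ k)"
proof (induction k)
  case (Suc k)
  have "(a + b) ^ (p ^ Suc k) = ((a + b) ^ (p ^ k)) ^ p"
    by (simp only: power_Suc2 power_mult)
  also have "\<dots> = (a ^ (p ^ k)) ^ p + (b ^ (p ^ k)) ^ p" using Suc frob_add[OF p z] by simp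
  also have "\<dots> = a ^ (p ^ Suc k) + b ^ (p ^ Suc k)" by (simp only: power_Suc2 power_mult)
  finally show ?case .
qed simp

lemma frob_pow_sum:
  fixes f :: "'b \<Rightarrow> 'a::comm_ring_1"
  assumes p: "prime p" and z: "of_nat p = (0::'a)"
  shows "(sum f A) ^ (p ^ k) = (\<Sum>x\<in>A. (f x) ^ (p ^ k))"
proof (induction A rule: infinite_finite_induct)
  case (infinite A) then show ?case using p prime_gt_0_nat by (simp add: zero_power)
next
  case empty then show ?case using p prime_gt_0_nat by (simp add: zero_power)
next
  case (insert x F) then show ?case by (simp add: frob_pow_add[OF p z])
qed

lemma power_card_same:
  fixes x :: "'a :: {field,finite}"
  shows   "x ^ card (UNIV :: 'a set) = x"
proof (cases "x = 0")
  case False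
  have "x * (\<Prod>y\<in>UNIV-{0}. x * y) = x * x ^ (card (UNIV :: 'a set) - 1) * \<Prod>(UNIV-{0})"
    by (simp add: prod.distrib mult_ac)
  also have "x * x ^ (card (UNIV :: 'a set) - 1) = x ^ Suc (card (UNIV :: 'a set) - 1)"
    by (subst power_Suc) auto
  also have "Suc (card (UNIV :: 'a set) - 1) = card (UNIV :: 'a set)"
    using finite_UNIV_card_ge_0[where ?'a = 'a] by simp
  also have "(\<Prod>y\<in>UNIV-{0}. x * y) = (\<Prod>y\<in>UNIV-{0}. y)"
    by (rule prod.reindex_bij_witness[of _ "\<lambda>y. y / x" "\<lambda>y. x * y"]) (use False in auto)
  finally show ?thesis
    by simp
qed (use finite_UNIV_card_ge_0[where ?'a = 'a] in auto)

lemma char_is_p: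
  assumes p: "prime p" and e: "e \<ge> 1" and c: "CARD('a::{field,finite}) = p ^ e"
  shows "of_nat p = (0::'a)"
proof -
  have fin: "finite (UNIV :: 'a set)" by simp
  have pc: "prime CHAR('a)"
    using prime_CHAR_semidom[where ?'a = 'a] finite_imp_CHAR_pos[OF fin] by auto
  have "CHAR('a) dvd p ^ e" using CHAR_dvd_CARD[where 'a='a] c by simp
  then have "CHAR('a) dvd p" using pc prime_dvd_power by blast
  then have "CHAR('a) = p" using pc p by (simp add: primes_dvd_imp_eq)
  then show ?thesis by (metis of_nat_CHAR)
qed


lemma sigmaM_mult:
  fixes A :: "'a::field ^'m::finite ^'n" and B :: "'a ^'k ^'m"
  assumes p: "prime p" and z: "of_nat p = (0::'a)"
  shows "sigmaM p k (A ** B) = sigmaM p k A ** sigmaM p k B"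
  by (simp add: sigmaM_def matrix_matrix_mult_def frob_pow_sum[OF p z] power_mult_distrib vec_eq_iff)

lemma sigmaM_mat1:
  assumes p: "prime p"
  shows "sigmaM p k (mat 1 :: 'a::field ^'n^'n) = mat 1"
proof -
  have "p ^ k > 0" using p prime_gt_0_nat by simp
  then show ?thesis by (simp add: sigmaM_def mat_def vec_eq_iff zero_power)
qed

lemma cG_eq:
  fixes A :: "'a::field ^'m::finite ^'n" and B :: "'a ^'k ^'m"
  shows "(\<chi> i j. c * (A ** B) $ i $ j) = A ** mat c ** B"
proof -
  have "A ** mat c = (\<chi> i j. A $ i $ j * c)"
    by (simp add: matrix_matrix_mult_def mat_def vec_eq_iff if_distrib if_distribR sum.delta' cong: if_cong)
  then show ?thesis
    by (simp add: matrix_matrix_mult_def vec_eq_iff sum_distrib_left mult_ac)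
qed

lemma gip_axis:
  fixes v :: "'a::field ^'n::finite"
  assumes p: "prime p"
  shows "gip p l (axis i 1) v = v $ i"
proof -
  have "p ^ l > 0" using p prime_gt_0_nat by simp
  then show ?thesis
    by (simp add: gip_def axis_def if_distrib if_distribR zero_power sum.delta cong: if_cong)
qed

lemma gip_mat:
  fixes x y :: "'a::field ^'n::finite"
  shows "c * gip p l x y = gip p l x (mat c *v y)"
proof -
  have "mat c *v y = c *s y"
    by (simp add: matrix_vector_mult_def mat_def vec_eq_iff if_distrib if_distribR sum.delta' cong: if_cong)
  then show ?thesis by (simp add: gip_def sum_distrib_left mult_ac)
qed

lemma gip_adj:
  fixes Phi :: "'a::{field,finite} ^'m::finite ^'n::finite" and x :: "'a^'n" and w :: "'a^'m"
  assumes p: "prime p" and z: "of_nat p = (0::'a)" and c: "CARD('a) = p ^ e" and le: "l < e"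
  shows "gip p l (dagger p (e - l) Phi *v x) w = gip p l x (Phi *v w)"
proof -
  have pe: "p ^ (e - l) * p ^ l = p ^ e" using le by (simp add: power_add[symmetric])
  have idm: "(a::'a) ^ (p ^ e) = a" for a using power_card_same[of a] c by simp
  have "((dagger p (e - l) Phi *v x) $ j) ^ (p ^ l) = (\<Sum>i\<in>UNIV. Phi $ i $ j * (x $ i) ^ (p ^ l))" for j
    by (simp add: dagger_def sigmaM_def transpose_def matrix_vector_mult_def frob_pow_sum[OF p z]
        power_mult_distrib power_mult[symmetric] pe idm)
  then have "gip p l (dagger p (e - l) Phi *v x) w
      = (\<Sum>j\<in>UNIV. (\<Sum>i\<in>UNIV. Phi $ i $ j * (x $ i) ^ (p ^ l)) * w $ j)"
    by (simp add: gip_def)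
  also have "\<dots> = (\<Sum>i\<in>UNIV. (x $ i) ^ (p ^ l) * (\<Sum>j\<in>UNIV. Phi $ i $ j * w $ j))"
    unfolding sum_distrib_right sum_distrib_left
    by (subst sum.swap) (simp add: mult_ac)
  also have "\<dots> = gip p l x (Phi *v w)"
    by (simp add: gip_def matrix_vector_mult_def)
  finally show ?thesis .
qed


theorem mainTheorem3:
  fixes p e l :: nat
    and Phi :: "'a::{field,finite} ^'m::finite ^'n::finite"
    and c :: 'a
  assumes "prime p" and "e \<ge> 1" and "CARD('a) = p ^ e"
    and "l \<le> e - 1"
    and "CARD('m) \<ge> CARD('n)"
    and "vec.span (range (\<lambda>j. column j Phi)) = UNIV"
  shows "(Phi ** dagger p l Phi = mat c
           \<longleftrightarrow> (dagger p l Phi ** Phi) ** (dagger p l Phi ** Phi)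
                 = (\<chi> i j. c * (dagger p l Phi ** Phi) $ i $ j))
       \<and> ((dagger p l Phi ** Phi) ** (dagger p l Phi ** Phi)
                 = (\<chi> i j. c * (dagger p l Phi ** Phi) $ i $ j)
           \<longleftrightarrow> (\<forall>x y :: 'a^'n. gip p l (dagger p (e - l) Phi *v x) (dagger p l Phi *v y)
                                = c * gip p l x y))"
proof -
  note p = assms(1)
  have z: "of_nat p = (0::'a)" using char_is_p assms(1-3) by blast
  have le: "l < e" using assms(2,4) by linarith
  have "columns Phi = range (\<lambda>j. column j Phi)" by (auto simp: columns_def)
  then obtain B :: "'a^'n^'m" where PB: "Phi ** B = mat 1"
    using matrix_right_invertible_span_columns[of Phi] assms(6) by auto
  define D where "D = dagger p l Phi"
  define L where "L = transpose (sigmaM p l B)"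
  have LD: "L ** D = mat 1"
  proof -
    have "L ** D = transpose (sigmaM p l Phi ** sigmaM p l B)"
      by (simp add: L_def D_def dagger_def matrix_transpose_mul)
    also have "\<dots> = mat 1"
      by (simp add: sigmaM_mult[OF p z, symmetric] PB sigmaM_mat1[OF p])
    finally show ?thesis .
  qed
  have E12: "Phi ** D = mat c \<longleftrightarrow> (D ** Phi) ** (D ** Phi) = (\<chi> i j. c * (D ** Phi) $ i $ j)"
  proof
    assume h: "Phi ** D = mat c"
    have "(D ** Phi) ** (D ** Phi) = D ** (Phi ** D) ** Phi" by (simp add: matrix_mul_assoc)
    then show "(D ** Phi) ** (D ** Phi) = (\<chi> i j. c * (D ** Phi) $ i $ j)"
      by (simp add: h cG_eq)
  next
    assume h: "(D ** Phi) ** (D ** Phi) = (\<chi> i j. c * (D ** Phi) $ i $ j)"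
    have "Phi ** D = (L ** D) ** (Phi ** D) ** (Phi ** B)" by (simp add: LD PB)
    also have "\<dots> = L ** ((D ** Phi) ** (D ** Phi)) ** B" by (simp add: matrix_mul_assoc)
    also have "\<dots> = L ** (D ** mat c ** Phi) ** B" by (simp add: h cG_eq)
    also have "\<dots> = (L ** D) ** mat c ** (Phi ** B)" by (simp add: matrix_mul_assoc)
    also have "\<dots> = mat c" by (simp add: LD PB)
    finally show "Phi ** D = mat c" .
  qed
  have E13: "(\<forall>x y :: 'a^'n. gip p l (dagger p (e - l) Phi *v x) (D *v y) = c * gip p l x y)
      \<longleftrightarrow> Phi ** D = mat c"
  proof -
    have "(\<forall>x y :: 'a^'n. gip p l (dagger p (e - l) Phi *v x) (D *v y) = c * gip p l x y)
       \<longleftrightarrow> (\<forall>x y :: 'a^'n. gip p l x ((Phi ** D) *v y) = gip p l x (mat c *v y))"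
      by (simp add: gip_adj[OF p z assms(3) le] gip_mat matrix_vector_mul_assoc)
    also have "\<dots> \<longleftrightarrow> (\<forall>y. (Phi ** D) *v y = mat c *v y)"
    proof
      assume h: "\<forall>x y :: 'a^'n. gip p l x ((Phi ** D) *v y) = gip p l x (mat c *v y)"
      show "\<forall>y. (Phi ** D) *v y = mat c *v y"
      proof
        fix y
        show "(Phi ** D) *v y = mat c *v y"
          using h[rule_format, of "axis _ 1" y] by (simp add: vec_eq_iff gip_axis[OF p])
      qed
    qed simp
    also have "\<dots> \<longleftrightarrow> Phi ** D = mat c" by (simp add: matrix_eq)
    finally show ?thesis .
  qed
  show ?thesis using E12 E13 unfolding D_def by blast
qed

end
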